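(* Let $n\ge2$ and $0\le r_l\le r_u<1$. For all $x,y\in\mathbb{B}^n$ with $r_l\le|x|\le|y|\le r_u$, $$\frac{1+r_l}{2}\,\mathrm{th}\frac{\rho_{\mathbb{B}^n}(x,y)}{2}\le p_{\mathbb{B}^n}(x,y)\le\frac{1+r_u^2}{2\sqrt{1-2r_u+2r_u^2}}\,\mathrm{th}\frac{\rho_{\mathbb{B}^n}(x,y)}{2},$$ and these are the best possible constants depending only on $r_l$ and $r_u$.
   Context: $\mathbb{B}^n$ is the unit ball of $\mathbb{R}^n$. For a domain $G\subsetneq\mathbb{R}^n$ and $x\in G$, $d_G(x)=\inf\{|x-z|:z\in\partial G\}$. The hyperbolic metric of the unit ball satisfies $\mathrm{th}\frac{\rho_{\mathbb{B}^n}(x,y)}{2}=\frac{|x-y|}{\sqrt{|x-y|^2+(1-|x|^2)(1-|y|^2)}}$. The point pair function is $p_G(x,y)=\frac{|x-y|}{\sqrt{|x-y|^2+4d_G(x)d_G(y)}}$. *)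

theory Defs
  imports "HOL-Analysis.Analysis"
begin

definition dist_bd :: "'a::euclidean_space set \<Rightarrow> 'a \<Rightarrow> real" where
  "dist_bd G x = infdist x (frontier G)"

definition ppf :: "'a::euclidean_space set \<Rightarrow> 'a \<Rightarrow> 'a \<Rightarrow> real" where
  "ppf G x y = norm (x - y) / sqrt ((norm (x - y))\<^sup>2 + 4 * dist_bd G x * dist_bd G y)"

text \<open>Hyperbolic metric of the unit ball, via th(rho/2) = formula.\<close>
definition rho_ball :: "'a::euclidean_space \<Rightarrow> 'a \<Rightarrow> real" where
  "rho_ball x y = 2 * artanh (norm (x - y) /
      sqrt ((norm (x - y))\<^sup>2 + (1 - (norm x)\<^sup>2) * (1 - (norm y)\<^sup>2)))"

end

theory Submission imports Defs begin

lemma tanh_artanh_real: fixes t::real assumes "-1<t" "t<1" shows "tanh (artanh t) = t"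
proof -
  define q where "q = (1+t)/(1-t)"
  have q: "q>0" using assms by (simp add: q_def)
  have "artanh t = ln (sqrt q)" using q by (simp add: artanh_def q_def ln_sqrt)
  then have "tanh (artanh t) = ((sqrt q)^2 - 1)/((sqrt q)^2+1)" using tanh_ln_real q by simp
  also have "... = (q-1)/(q+1)" using q by simp
  also have "... = t" using assms by (simp add: q_def field_simps)
  finally show ?thesis .
qed

lemma dist_bd_ball: fixes x :: "'a::euclidean_space" assumes "norm x < 1"
  shows "dist_bd (ball 0 1) x = 1 - norm x"
proof -
  obtain z::'a where z: "norm z = 1" "dist x z = 1 - norm x"
  proof (cases "x = 0")
    case True
    obtain e::'a where "e \<in> Basis" using nonempty_Basis by blast
    then show ?thesis using that[of e] True by auto
  next
    case False
    have "x - x /\<^sub>R norm x = (1 - 1 / norm x) *\<^sub>R x"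
      by (simp add: scaleR_diff_left divide_inverse_commute)
    then have "dist x (x /\<^sub>R norm x) = norm ((1 - 1 / norm x) *\<^sub>R x)"
      by (simp add: dist_norm)
    also have "\<dots> = \<bar>1 - 1/norm x\<bar> * norm x" by simp
    also have "\<dots> = 1 - norm x" using False assms
      by (simp add: abs_if field_simps)
    finally show ?thesis using that[of "x /\<^sub>R norm x"] False by simp
  qed
  have ne: "sphere (0::'a) 1 \<noteq> {}" using z by auto
  have "infdist x (sphere 0 1) \<le> 1 - norm x" using infdist_le[of z "sphere 0 1" x] z by simp
  moreover have "infdist x (sphere 0 1) \<ge> 1 - norm x"
    unfolding infdist_notempty[OF ne]
  proof (rule cINF_greatest[OF ne])
    fix w :: 'a assume "w \<in> sphere 0 1"
    then have "norm w = 1" by simp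
    then show "1 - norm x \<le> dist x w"
      using norm_triangle_ineq2[of w x] by (simp add: dist_norm norm_minus_commute)
  qed
  ultimately show ?thesis by (simp add: dist_bd_def)
qed

lemma mono_f:
  fixes a a' b :: real
  assumes "0 \<le> a" "a \<le> a'" "a' \<le> 1" "0 \<le> b" "b \<le> 1"
  shows "(1+a*b)^2 * ((2-a'-b)^2+4*a'*b) \<le> (1+a'*b)^2 * ((2-a-b)^2+4*a*b)"
proof -
  define tc where "tc = b^4-4*b^3+4*b^2-1"
  define qc where "qc = -2*b-4*b^2+6*b^3"
  define K where "K = 4 + 2*b - 8*b^2 + 2*b^3"
  have "tc = (b-1)^2*(b^2-2*b-1)" by (simp add: tc_def power2_eq_square power3_eq_cube power4_eq_xxxx algebra_simps)
  moreover have "b^2 \<le> b" using assms by (simp add: power2_eq_square mult_left_le)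
  then have "b^2-2*b-1 \<le> 0" using assms by simp
  ultimately have tc: "tc \<le> 0" by (simp add: mult_nonneg_nonpos)
  have "qc = -(2*b*((1-b)*(1+3*b)))" by (simp add: qc_def power2_eq_square power3_eq_cube algebra_simps)
  moreover have "0 \<le> 2*b*((1-b)*(1+3*b))" using assms by simp
  ultimately have qc: "qc \<le> 0" by simp
  have t2: "(a+a')*tc \<ge> 2*tc" using tc assms by (intro mult_right_mono_neg) auto
  have "a*a' \<le> 1" using assms by (simp add: mult_le_one)
  then have q1: "(a*a')*qc \<ge> qc" using qc by (metis mult_1 mult_right_mono_neg)
  have "K + 2*tc + qc = 2*(1-b^2)^2" by (simp add: K_def tc_def qc_def power2_eq_square power3_eq_cube power4_eq_xxxx algebra_simps)
  then have Q: "K + (a+a')*tc + (a*a')*qc \<ge> 0" using t2 q1 by (smt (verit) zero_le_power2 mult_nonneg_nonneg)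
  have E: "(1+a'*b)^2 * ((2-a-b)^2+4*a*b) - (1+a*b)^2 * ((2-a'-b)^2+4*a'*b)
     = (a'-a) * (K + (a+a')*tc + (a*a')*qc)"
    by (simp add: K_def tc_def qc_def power2_eq_square power3_eq_cube power4_eq_xxxx algebra_simps)
  have "(a'-a) * (K + (a+a')*tc + (a*a')*qc) \<ge> 0" using Q assms by simp
  then show ?thesis using E by simp
qed

lemma fmax:
  fixes a b r :: real
  assumes "0 \<le> a" "a \<le> b" "b \<le> r" "r < 1"
  shows "4*(1-2*r+2*r^2)*(1+a*b)^2 \<le> (1+r^2)^2*((2-a-b)^2+4*a*b)"
proof -
  define Dr where "Dr = (2-r-b)^2+4*r*b"
  define Dab where "Dab = (2-a-b)^2+4*a*b"
  define G where "G = 1-2*r+2*r^2"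
  define M where "M = (1+r^2)^2"
  have h1: "(1+a*b)^2 * Dr \<le> (1+r*b)^2 * Dab" using mono_f[of a r b] assms by (simp add: Dr_def Dab_def)
  have h2: "(1+b*r)^2 * ((2-r-r)^2+4*r*r) \<le> (1+r*r)^2 * ((2-b-r)^2+4*b*r)" using mono_f[of b r r] assms by simp
  have e1: "(2-r-r)^2+4*r*r = 4*G" by (simp add: G_def power2_eq_square algebra_simps)
  have e2: "(2-b-r)^2+4*b*r = Dr" by (simp add: Dr_def power2_eq_square algebra_simps)
  have h2': "(1+r*b)^2 * (4*G) \<le> M * Dr" using h2 unfolding e1 e2 by (simp add: M_def power2_eq_square mult.commute)
  have Dr: "Dr > 0" using assms unfolding Dr_def by (intro add_pos_nonneg) auto
  have Dab: "Dab \<ge> 0" using assms unfolding Dab_def by (intro add_nonneg_nonneg) auto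
  have "G = (1-r)^2 + r^2" by (simp add: G_def power2_eq_square algebra_simps)
  then have G: "G \<ge> 0" by simp
  have "(4*G*(1+a*b)^2)*Dr = 4*G*((1+a*b)^2*Dr)" by simp
  also have "\<dots> \<le> 4*G*((1+r*b)^2 * Dab)" using h1 G by (intro mult_left_mono) auto
  also have "\<dots> = ((1+r*b)^2 * (4*G))*Dab" by simp
  also have "\<dots> \<le> (M * Dr)*Dab" using h2' Dab by (intro mult_right_mono) auto
  also have "\<dots> = (M*Dab)*Dr" by simp
  finally have "(4*G*(1+a*b)^2)*Dr \<le> (M*Dab)*Dr" .
  then show ?thesis using Dr unfolding G_def M_def Dab_def by simp
qed

lemma sqrt4: "sqrt (4::real) = 2"
  using real_sqrt_abs[of "2::real"] by simp

lemma upper_real: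
  fixes a b r u :: real
  assumes "0 \<le> a" "a \<le> b" "b \<le> r" "r<1" "0 \<le> u" "u \<le> a+b"
  shows "u/sqrt(u^2+4*(1-a)*(1-b)) \<le> (1+r^2)/(2* sqrt(1-2*r+2*r^2)) * (u/sqrt(u^2+(1-a^2)*(1-b^2)))"
proof -
  define G where "G = 1-2*r+2*r^2"
  define M where "M = (1+r^2)^2"
  define A where "A = (1-a^2)*(1-b^2)"
  define B where "B = 4*(1-a)*(1-b)"
  define D where "D = (2-a-b)^2+4*a*b"
  have "G = (1-r)^2 + r^2" by (simp add: G_def power2_eq_square algebra_simps)
  moreover have "(1-r)^2 > 0" using assms by simp
  ultimately have Gp: "G > 0" by (simp add: add_pos_nonneg)
  have a1: "a < 1" "b < 1" using assms by auto
  have Ap: "A > 0" unfolding A_def using a1 assms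
    using power_strict_mono[of a 1 2] power_strict_mono[of b 1 2] by (intro mult_pos_pos) auto
  have Bp: "B > 0" unfolding B_def using a1 by simp
  have fm: "4*G*(1+a*b)^2 \<le> M*D" using fmax[OF assms(1-4)] by (simp add: G_def M_def D_def)
  have iA: "A = (1+a*b)^2 - (a+b)^2" by (simp add: A_def power2_eq_square algebra_simps)
  have iB: "B = D - (a+b)^2" by (simp add: B_def D_def power2_eq_square algebra_simps)
  have d: "4*G - M = (1-r)^3*(r+3)" by (simp add: G_def M_def power2_eq_square power3_eq_cube algebra_simps)
  have "(1-r)^3*(r+3) \<ge> 0" using assms by simp
  then have d0: "4*G - M \<ge> 0" using d by simp
  have "u^2 \<le> (a+b)^2" using assms by (intro power_mono) auto
  then have mo: "(4*G-M)*u^2 \<le> (4*G-M)*(a+b)^2" using d0 by (intro mult_left_mono) auto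
  have "M*(u^2+B) - 4*G*(u^2+A) = (M*D - 4*G*(1+a*b)^2) + ((4*G-M)*(a+b)^2 - (4*G-M)*u^2)"
    unfolding iA iB by (simp add: algebra_simps)
  then have key: "4*G*(u^2+A) \<le> M*(u^2+B)" using fm mo by linarith
  define SA where "SA = sqrt (u^2+A)"
  define SB where "SB = sqrt (u^2+B)"
  have SA: "SA > 0" unfolding SA_def using Ap by (simp add: add_nonneg_pos)
  have SB: "SB > 0" unfolding SB_def using Bp by (simp add: add_nonneg_pos)
  have sG: "sqrt G > 0" using Gp by simp
  have "sqrt (4*G*(u^2+A)) \<le> sqrt (M*(u^2+B))" using key by simp
  moreover have "sqrt (4*G*(u^2+A)) = 2* sqrt G*SA" by (simp add: SA_def real_sqrt_mult sqrt4)
  moreover have "sqrt (M*(u^2+B)) = (1+r^2)*SB" by (simp add: SB_def M_def real_sqrt_mult)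
  ultimately have k2: "2* sqrt G*SA \<le> (1+r^2)*SB" by simp
  have "u*(2* sqrt G*SA) \<le> u*((1+r^2)*SB)" using k2 assms by (intro mult_left_mono) auto
  then have "u/SB \<le> (1+r^2)/(2* sqrt G) * (u/SA)" using SA SB sG by (simp add: field_simps)
  then show ?thesis by (simp add: SA_def SB_def A_def B_def G_def)
qed

lemma lower_real:
  fixes a b rl u :: real
  assumes "0 \<le> rl" "rl \<le> a" "a \<le> b" "b<1" "0 \<le> u"
  shows "(1+rl)/2 * (u/sqrt(u^2+(1-a^2)*(1-b^2))) \<le> u/sqrt(u^2+4*(1-a)*(1-b))"
proof -
  define A where "A = (1-a^2)*(1-b^2)"
  define B where "B = 4*(1-a)*(1-b)"
  have Ap: "A > 0" unfolding A_def using assms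
    using power_strict_mono[of a 1 2] power_strict_mono[of b 1 2] by (intro mult_pos_pos) auto
  have Bp: "B > 0" unfolding B_def using assms by simp
  have r1: "(1+rl)^2 \<le> (1+a)*(1+b)" unfolding power2_eq_square using assms by (intro mult_mono) auto
  have r2: "(1+rl)^2 \<le> 2^2" using assms by (intro power_mono) auto
  have "(1+rl)^2 * B \<le> ((1+a)*(1+b))*(4*(1-a)*(1-b))" unfolding B_def using r1 assms
    by (intro mult_right_mono) auto
  also have "\<dots> = 4*A" by (simp add: A_def power2_eq_square algebra_simps)
  finally have k1: "(1+rl)^2 * B \<le> 4*A" .
  have "(1+rl)^2 * u^2 \<le> 4*u^2" using r2 by (intro mult_right_mono) auto
  with k1 have key: "(1+rl)^2*(u^2+B) \<le> 4*(u^2+A)" by (simp add: algebra_simps)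
  define SA where "SA = sqrt (u^2+A)"
  define SB where "SB = sqrt (u^2+B)"
  have SA: "SA > 0" unfolding SA_def using Ap by (simp add: add_nonneg_pos)
  have SB: "SB > 0" unfolding SB_def using Bp by (simp add: add_nonneg_pos)
  have "sqrt ((1+rl)^2*(u^2+B)) \<le> sqrt (4*(u^2+A))" using key by simp
  moreover have "sqrt (4*(u^2+A)) = 2*SA" by (simp only: SA_def real_sqrt_mult sqrt4)
  moreover have "sqrt ((1+rl)^2*(u^2+B)) = (1+rl)*SB" using assms by (simp add: SB_def real_sqrt_mult)
  ultimately have k2: "(1+rl)*SB \<le> 2*SA" by simp
  have "u*((1+rl)*SB) \<le> u*(2*SA)" using k2 assms by (intro mult_left_mono) auto
  then have "(1+rl)/2 * (u/SA) \<le> u/SB" using SA SB by (simp add: field_simps)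
  then show ?thesis by (simp add: SA_def SB_def A_def B_def)
qed

lemma th_eq:
  fixes x y :: "'a::euclidean_space"
  assumes "norm x < 1" "norm y < 1"
  shows "tanh (rho_ball x y / 2) = norm (x-y) / sqrt ((norm (x-y))^2 + (1-(norm x)^2)*(1-(norm y)^2))"
proof -
  define u where "u = norm (x-y)"
  define A where "A = (1-(norm x)^2)*(1-(norm y)^2)"
  have Ap: "A > 0" unfolding A_def using assms
    using power_strict_mono[of "norm x" 1 2] power_strict_mono[of "norm y" 1 2] by (intro mult_pos_pos) auto
  have u0: "u \<ge> 0" by (simp add: u_def)
  have S: "sqrt (u^2+A) > 0" using Ap by (simp add: add_nonneg_pos)
  have "u < sqrt (u^2+A)" using real_sqrt_less_mono[of "u^2" "u^2+A"] Ap u0 by simp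
  then have lt: "u / sqrt (u^2+A) < 1" using S by simp
  have ge: "u / sqrt (u^2+A) \<ge> 0" using u0 S by simp
  have "rho_ball x y / 2 = artanh (u / sqrt (u^2+A))" by (simp add: rho_ball_def u_def A_def)
  then show ?thesis using tanh_artanh_real[of "u / sqrt (u^2+A)"] lt ge by (simp add: u_def A_def)
qed

lemma ppf_eq:
  fixes x y :: "'a::euclidean_space"
  assumes "norm x < 1" "norm y < 1"
  shows "ppf (ball 0 1) x y = norm (x-y) / sqrt ((norm (x-y))^2 + 4*(1-norm x)*(1-norm y))"
  using assms by (simp add: ppf_def dist_bd_ball mult.assoc)

lemma two_basis:
  assumes "DIM('a::euclidean_space) \<ge> 2"
  shows "\<exists>e1 e2 :: 'a. e1 \<in> Basis \<and> e2 \<in> Basis \<and> e1 \<noteq> e2"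
proof -
  obtain e1 :: 'a where e1: "e1 \<in> Basis" using nonempty_Basis by blast
  have "Basis - {e1} \<noteq> {}"
  proof
    assume "Basis - {e1} = {}"
    then have "(Basis::'a set) = {e1}" using e1 by auto
    then have "card (Basis::'a set) = card {e1}" by (rule arg_cong)
    then have "card (Basis::'a set) = 1" by simp
    then show False using assms by simp
  qed
  then obtain e2 where "e2 \<in> Basis - {e1}" by blast
  then show ?thesis using e1 by auto
qed

lemma construct:
  assumes "DIM('a::euclidean_space) \<ge> 2" "0 < u" "u \<le> 2*a"
  shows "\<exists>x y :: 'a. norm x = a \<and> norm y = a \<and> norm (x - y) = u"
proof -
  obtain e1 e2 :: 'a where e: "e1 \<in> Basis" "e2 \<in> Basis" "e1 \<noteq> e2" using two_basis[OF assms(1)] by blast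
  define \<beta> where "\<beta> = u/2"
  define \<alpha> where "\<alpha> = sqrt (a^2 - \<beta>^2)"
  have a0: "a > 0" using assms by simp
  have "\<beta>^2 \<le> a^2" unfolding \<beta>_def using assms by (intro power_mono) auto
  then have al: "\<alpha>^2 = a^2 - \<beta>^2" unfolding \<alpha>_def by simp
  define x where "x = \<alpha> *\<^sub>R e1 + \<beta> *\<^sub>R e2"
  define y where "y = \<alpha> *\<^sub>R e1 - \<beta> *\<^sub>R e2"
  have e21: "e2 \<noteq> e1" using e by auto
  have "inner x x = \<alpha>^2 + \<beta>^2"
    by (simp add: x_def inner_add_left inner_add_right inner_Basis e e21 power2_eq_square)
  then have "(norm x)^2 = a^2" using al by (simp add: power2_norm_eq_inner)
  then have nx: "norm x = a" using a0 by (simp add: power2_eq_iff_nonneg)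
  have "inner y y = \<alpha>^2 + \<beta>^2"
    by (simp add: y_def inner_diff_left inner_diff_right inner_Basis e e21 power2_eq_square)
  then have "(norm y)^2 = a^2" using al by (simp add: power2_norm_eq_inner)
  then have ny: "norm y = a" using a0 by (simp add: power2_eq_iff_nonneg)
  have "x - y = u *\<^sub>R e2" by (simp add: x_def y_def \<beta>_def algebra_simps scaleR_2 flip: scaleR_add_left)
  then have "norm (x - y) = u" using assms e by simp
  then show ?thesis using nx ny by blast
qed

lemma cancel3: "(X::real) \<noteq> 0 \<Longrightarrow> X/Y*(Z/X) = Z/Y"
  by (cases "Y=0") (simp_all add: field_simps)

lemma ratio_lt:
  fixes u A B c :: real
  assumes "0 < u" "A > 0" "B > 0" "c > 0" "u^2+A < c^2*(u^2+B)"
  shows "u/sqrt(u^2+B) < c*(u/sqrt(u^2+A))"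
proof -
  define SA where "SA = sqrt (u^2+A)"
  define SB where "SB = sqrt (u^2+B)"
  have SA: "SA > 0" unfolding SA_def using assms by (simp add: add_nonneg_pos)
  have SB: "SB > 0" unfolding SB_def using assms by (simp add: add_nonneg_pos)
  have "sqrt (u^2+A) < sqrt (c^2*(u^2+B))" using assms by simp
  also have "sqrt (c^2*(u^2+B)) = c*SB" using assms by (simp add: SB_def real_sqrt_mult)
  finally have "SA < c*SB" by (simp add: SA_def)
  then have "u*SA < u*(c*SB)" using assms by simp
  then have "u/SB < c*(u/SA)" using SA SB by (simp add: field_simps)
  then show ?thesis by (simp add: SA_def SB_def)
qed

lemma antipodal:
  fixes r :: real
  assumes "0 < r" "r < 1"
  shows "(2*r)/sqrt((2*r)^2 + 4*(1-r)*(1-r)) = (1+r^2)/(2 * sqrt(1-2*r+2*r^2)) * ((2*r)/sqrt((2*r)^2+(1-r^2)*(1-r^2)))"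
proof -
  define G where "G = 1-2*r+2*r^2"
  have "G = (1-r)^2 + r^2" by (simp add: G_def power2_eq_square algebra_simps)
  moreover have "(1-r)^2 > 0" using assms by simp
  ultimately have Gp: "G > 0" by (simp add: add_pos_nonneg)
  have "(2*r)^2+(1-r^2)*(1-r^2) = (1+r^2)^2" by (simp add: power2_eq_square algebra_simps)
  then have s1: "sqrt((2*r)^2+(1-r^2)*(1-r^2)) = 1+r^2" by simp
  have "(2*r)^2 + 4*(1-r)*(1-r) = 4*G" by (simp add: G_def power2_eq_square algebra_simps)
  then have s2: "sqrt((2*r)^2 + 4*(1-r)*(1-r)) = 2 * sqrt G" by (simp only: real_sqrt_mult sqrt4)
  have p: "1+r^2 > 0" by (simp add: add_pos_nonneg)
  have "(1+r^2)/(2 * sqrt G) * ((2*r)/(1+r^2)) = (2*r)/(2 * sqrt G)" using p by (intro cancel3) simp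
  then show ?thesis unfolding s1 s2 G_def[symmetric] by simp
qed

theorem theorem3p4:
  fixes rl ru :: real
  assumes dim: "DIM('a::euclidean_space) \<ge> 2"
    and r: "0 \<le> rl" "rl \<le> ru" "ru < 1"
  shows "(\<forall>x y :: 'a. x \<in> ball 0 1 \<and> y \<in> ball 0 1 \<and> rl \<le> norm x \<and> norm x \<le> norm y \<and> norm y \<le> ru \<longrightarrow>
            (1 + rl) / 2 * tanh (rho_ball x y / 2) \<le> ppf (ball 0 1) x y \<and>
            ppf (ball 0 1) x y \<le> (1 + ru\<^sup>2) / (2 * sqrt (1 - 2 * ru + 2 * ru\<^sup>2)) * tanh (rho_ball x y / 2))
      \<and> (0 < ru \<longrightarrow>
          (\<forall>c > (1 + rl) / 2. \<exists>x y :: 'a. x \<in> ball 0 1 \<and> y \<in> ball 0 1 \<and> rl \<le> norm x \<and> norm x \<le> norm y \<and> norm y \<le> ru \<and>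
              ppf (ball 0 1) x y < c * tanh (rho_ball x y / 2))
        \<and> (\<forall>c < (1 + ru\<^sup>2) / (2 * sqrt (1 - 2 * ru + 2 * ru\<^sup>2)). \<exists>x y :: 'a. x \<in> ball 0 1 \<and> y \<in> ball 0 1 \<and> rl \<le> norm x \<and> norm x \<le> norm y \<and> norm y \<le> ru \<and>
              c * tanh (rho_ball x y / 2) < ppf (ball 0 1) x y))"
proof (intro conjI allI impI)
  fix x y :: 'a
  assume h: "x \<in> ball 0 1 \<and> y \<in> ball 0 1 \<and> rl \<le> norm x \<and> norm x \<le> norm y \<and> norm y \<le> ru"
  then have n: "norm x < 1" "norm y < 1" by auto
  have u: "norm (x-y) \<le> norm x + norm y" by (rule norm_triangle_ineq4)
  show "(1 + rl) / 2 * tanh (rho_ball x y / 2) \<le> ppf (ball 0 1) x y"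
    unfolding th_eq[OF n] ppf_eq[OF n] using h n r by (intro lower_real) auto
  show "ppf (ball 0 1) x y \<le> (1 + ru\<^sup>2) / (2 * sqrt (1 - 2 * ru + 2 * ru\<^sup>2)) * tanh (rho_ball x y / 2)"
    unfolding th_eq[OF n] ppf_eq[OF n] using h n r u by (intro upper_real) auto
next
  fix c :: real
  assume ru0: "0 < ru" and c: "c > (1 + rl) / 2"
  define a where "a = (if rl > 0 then rl else min ru ((2*c-1)/2))"
  have a0: "0 < a" "rl \<le> a" "a \<le> ru" "1 + a < 2*c" using r ru0 c by (auto simp: a_def min_def field_simps)
  have c0: "c > 0" using c r by simp
  have a1: "a < 1" using a0 r by simp
  define A where "A = (1-a^2)*(1-a^2)"
  define B where "B = 4*(1-a)*(1-a)"
  have Ap: "A > 0" unfolding A_def using a0 a1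
    using power_strict_mono[of a 1 2] by (intro mult_pos_pos) auto
  have Bp: "B > 0" unfolding B_def using a1 by simp
  have AB: "A = (1-a)^2*(1+a)^2" "B = (1-a)^2*(2^2)" by (simp_all add: A_def B_def power2_eq_square algebra_simps)
  have sq: "(1+a)^2 < (2*c)^2" using a0 by (intro power_strict_mono) auto
  have pa: "(1-a)^2 > 0" using a1 by simp
  have cB: "A < c^2*B" unfolding AB using sq pa by (simp add: power_mult_distrib mult_strict_left_mono)
  define K where "K = (1-a)^2*(4*c^2-(1+a)^2)/(1-c^2)"
  define u where "u = (if 1 \<le> c then 2*a else min (2*a) (min 1 (K/2)))"
  have Kc: "K > 0" if "c < 1"
  proof -
    have "c^2 < 1" using power_strict_mono[of c 1 2] c0 that by simp
    then show ?thesis unfolding K_def using sq pa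
      by (intro divide_pos_pos mult_pos_pos) (auto simp: power_mult_distrib)
  qed
  have up: "0 < u" "u \<le> 2*a" using a0 Kc by (auto simp: u_def)
  have key: "u^2 + A < c^2*(u^2+B)"
  proof (cases "1 \<le> c")
    case True
    then have "1 \<le> c^2" by (simp add: one_le_power)
    then have "u^2 \<le> c^2*u^2" by (simp add: mult_le_cancel_right1)
    then show ?thesis using cB by (simp add: algebra_simps)
  next
    case False
    then have K: "K > 0" using Kc by simp
    have "u \<le> 1" "u \<le> K/2" using False by (auto simp: u_def)
    then have "u^2 \<le> u" using up by (simp add: power2_eq_square mult_le_one mult_left_le)
    then have "u^2 < K" using \<open>u \<le> K/2\<close> K by simp
    moreover have "1 - c^2 > 0" using False c0 by (simp add: power_less_one_iff abs_square_less_1)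
    ultimately have "(1-c^2)*u^2 < (1-c^2)*K" by simp
    also have "(1-c^2)*K = (1-a)^2*(4*c^2-(1+a)^2)" unfolding K_def using \<open>1 - c^2 > 0\<close> by simp
    also have "\<dots> = c^2*B - A" unfolding AB by (simp add: algebra_simps)
    finally show ?thesis by (simp add: algebra_simps)
  qed
  obtain x y :: 'a where xy: "norm x = a" "norm y = a" "norm (x - y) = u"
    using construct[OF dim up] by blast
  have n: "norm x < 1" "norm y < 1" using xy a1 by auto
  have "ppf (ball 0 1) x y < c * tanh (rho_ball x y / 2)"
    unfolding th_eq[OF n] ppf_eq[OF n] xy using ratio_lt[OF up(1) Ap Bp c0 key] by (simp add: A_def B_def power2_eq_square)
  then show "\<exists>x y :: 'a. x \<in> ball 0 1 \<and> y \<in> ball 0 1 \<and> rl \<le> norm x \<and> norm x \<le> norm y \<and> norm y \<le> ru \<and>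
              ppf (ball 0 1) x y < c * tanh (rho_ball x y / 2)"
    using xy n a0 by (intro exI[of _ x] exI[of _ y]) auto
next
  fix c :: real
  assume ru0: "0 < ru" and c: "c < (1 + ru\<^sup>2) / (2 * sqrt (1 - 2 * ru + 2 * ru\<^sup>2))"
  obtain e :: 'a where e: "e \<in> Basis" using nonempty_Basis by blast
  define x :: 'a where "x = ru *\<^sub>R e"
  define y :: 'a where "y = (-ru) *\<^sub>R e"
  have nx: "norm x = ru" "norm y = ru" using e ru0 by (auto simp: x_def y_def)
  have "x - y = (2*ru) *\<^sub>R e" by (simp add: x_def y_def algebra_simps scaleR_2 flip: scaleR_add_left)
  then have nxy: "norm (x - y) = 2*ru" using e ru0 by simp
  have n: "norm x < 1" "norm y < 1" using nx r by auto
  define th where "th = (2*ru)/sqrt((2*ru)^2+(1-ru^2)*(1-ru^2))"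
  have th: "tanh (rho_ball x y / 2) = th" unfolding th_eq[OF n] nx nxy th_def by simp
  have p: "ppf (ball 0 1) x y = (1 + ru\<^sup>2) / (2 * sqrt (1 - 2 * ru + 2 * ru\<^sup>2)) * th"
    unfolding ppf_eq[OF n] nx nxy th_def using antipodal[OF ru0 r(3)] by simp
  have "(1-ru^2)*(1-ru^2) \<ge> 0" by simp
  then have thp: "th > 0" unfolding th_def using ru0 by (intro divide_pos_pos) (auto simp: add_pos_nonneg)
  have "c * tanh (rho_ball x y / 2) < ppf (ball 0 1) x y" unfolding th p using c thp by (intro mult_strict_right_mono) auto
  then show "\<exists>x y :: 'a. x \<in> ball 0 1 \<and> y \<in> ball 0 1 \<and> rl \<le> norm x \<and> norm x \<le> norm y \<and> norm y \<le> ru \<and>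
              c * tanh (rho_ball x y / 2) < ppf (ball 0 1) x y"
    using nx n r by (intro exI[of _ x] exI[of _ y]) auto
qed

end
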